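(* Let $F$ be the unique series in $\mathbb{Q}[x,\bar x,y,\bar y][[t]]$ satisfying $(1-St)F=\bar x\bar y-\bar x t[x^0]F-\bar y t[y^0]F$, and write $F(1,1,t)=\sum_{n\ge0}a_nt^n$ (so $a_n$ is the total number of $n$-step walks in the associated model). Then for all $n\ge0$, $$(n+2)(n+4)(n+6)(n^2+2n-1)\,a_{n+2}-4(n+3)(2n^3+9n^2+4n-18)\,a_{n+1}-16(n+1)(n+2)(n+3)(n^2+4n+2)\,a_n=0.$$
   Context: Notation: $\bar x=x^{-1}$, $\bar y=y^{-1}$, $S=x+y+\bar x+\bar y$; for $G=\sum c_{i,j,n}x^iy^jt^n$, $[x^0]G=\sum_{j,n}c_{0,j,n}y^jt^n$ and $[y^0]G=\sum_{i,n}c_{i,0,n}x^it^n$. $F$ counts walks in $\mathbb{Z}^2$ with unit steps $(\pm1,0),(0,\pm1)$ starting at $(-1,-1)$ that never take a west step from a point on the $y$-axis nor a south step from a point on the $x$-axis; $a_n$ is the number of such walks of length $n$. *)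

theory Defs
  imports Complex_Main
begin

text \<open>A series in Q[x, 1/x, y, 1/y][[t]] is represented by its coefficient function:
  F n i j is the coefficient of x^i y^j t^n.\<close>

type_synonym lseries = "nat \<Rightarrow> int \<Rightarrow> int \<Rightarrow> rat"

definition is_lseries :: "lseries \<Rightarrow> bool" where
  "is_lseries F \<longleftrightarrow> (\<forall>n. finite {(i, j). F n i j \<noteq> 0})"

text \<open>Multiplication by S = x + 1/x + y + 1/y.\<close>
definition mult_S :: "lseries \<Rightarrow> lseries" where
  "mult_S G = (\<lambda>n i j. G n (i - 1) j + G n (i + 1) j + G n i (j - 1) + G n i (j + 1))"

definition mult_t :: "lseries \<Rightarrow> lseries" where
  "mult_t G = (\<lambda>n i j. if n = 0 then 0 else G (n - 1) i j)"

definition mult_xbar :: "lseries \<Rightarrow> lseries" where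
  "mult_xbar G = (\<lambda>n i j. G n (i + 1) j)"

definition mult_ybar :: "lseries \<Rightarrow> lseries" where
  "mult_ybar G = (\<lambda>n i j. G n i (j + 1))"

definition coeff_x0 :: "lseries \<Rightarrow> lseries" where
  "coeff_x0 G = (\<lambda>n i j. if i = 0 then G n 0 j else 0)"

definition coeff_y0 :: "lseries \<Rightarrow> lseries" where
  "coeff_y0 G = (\<lambda>n i j. if j = 0 then G n i 0 else 0)"

definition xbar_ybar :: lseries where
  "xbar_ybar = (\<lambda>n i j. if n = 0 \<and> i = -1 \<and> j = -1 then 1 else 0)"

definition func_eq :: "lseries \<Rightarrow> bool" where
  "func_eq F \<longleftrightarrow> (\<forall>n i j.
     F n i j - mult_t (mult_S F) n i j =
     xbar_ybar n i j - mult_t (mult_xbar (coeff_x0 F)) n i j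
                     - mult_t (mult_ybar (coeff_y0 F)) n i j)"

definition eval11 :: "lseries \<Rightarrow> nat \<Rightarrow> rat" where
  "eval11 F n = (\<Sum>(i, j) \<in> {(i, j). F n i j \<noteq> 0}. F n i j)"

end

theory Submission imports Defs begin

definition B :: "nat \<Rightarrow> int \<Rightarrow> nat" where
"B n d = (if even (int n + d) \<and> \<bar>d\<bar> \<le> int n then n choose nat ((int n + d) div 2) else 0)"

lemma B_zero: "\<bar>d\<bar> > int n \<Longrightarrow> B n d = 0" by (simp add: B_def)

lemma B_neg: "B n (-d) = B n d"
proof (cases "even (int n + d) \<and> \<bar>d\<bar> \<le> int n")
  case True
  then obtain k where k: "int n + d = 2*k" by (meson evenE)
  have k0: "0 \<le> k" "k \<le> int n" using True k by auto
  have e: "even (int n - d)" using k by presburger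
  have "nat ((int n - d) div 2) = n - nat k" using k k0 by linarith
  moreover have "nat ((int n + d) div 2) = nat k" using k by simp
  ultimately show ?thesis using True e k0 by (auto simp: B_def binomial_symmetric[symmetric] intro!: binomial_symmetric)
next
  case False
  moreover have "even (int n + d) = even (int n - d)" by presburger
  ultimately show ?thesis by (auto simp: B_def)
qed

lemma B_suc: "B (Suc n) d = B n (d - 1) + B n (d + 1)"
proof (cases "even (int n + d)")
  case True
  then show ?thesis by (simp add: B_def)
next
  case False
  then obtain k where k: "int n + d + 1 = 2*k" by (metis add.commute evenE odd_add odd_one)
  show ?thesis
  proof (cases "0 \<le> k \<and> k \<le> int n + 1")
    case True
    have e0: "int (Suc n) + d = 2*k" using k by simp
    have e1: "even (int (Suc n) + d)" "\<bar>d\<bar> \<le> int (Suc n)" "(int (Suc n) + d) div 2 = k"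
      using e0 True by (simp, simp add: abs_le_iff, simp)
    have h1: "B (Suc n) d = Suc n choose nat k" using e1 by (simp only: B_def if_True simp_thms)
    show ?thesis
    proof (cases "k = 0")
      case True
      hence dd: "d = - int n - 1" using k by simp
      have "B n (d - 1) = 0" by (rule B_zero) (use dd in linarith)
      moreover have "B n (d + 1) = 1" unfolding B_def using dd by simp
      ultimately show ?thesis using h1 True by simp
    next
      case k0: False
      have "nat k > 0" using k0 True by simp
      then obtain j where j: "nat k = Suc j" using gr0_conv_Suc by blast
      have jk: "int j = k - 1" using j True by linarith
      have a1: "even (int n + (d - 1))" "\<bar>d - 1\<bar> \<le> int n" "nat ((int n + (d - 1)) div 2) = j"
      proof -
        have q: "int n + (d - 1) = 2*(k-1)" using k by simp
        show "even (int n + (d - 1))" unfolding q by simp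
        show "\<bar>d - 1\<bar> \<le> int n" using k True k0 by (simp add: abs_le_iff)
        show "nat ((int n + (d - 1)) div 2) = j" unfolding q using jk by simp
      qed
      have a: "B n (d - 1) = n choose j" using a1 by (simp only: B_def if_True simp_thms)
      have b: "B n (d + 1) = n choose Suc j" 
      proof (cases "k = int n + 1")
        case True then show ?thesis using k j by (simp add: B_def)
      next
        case False
        have q: "int n + (d + 1) = 2*k" using k by simp
        have b1: "even (int n + (d + 1))" unfolding q by simp
        have b2: "\<bar>d + 1\<bar> \<le> int n" using k False \<open>0 \<le> k \<and> k \<le> int n + 1\<close> by (simp add: abs_le_iff)
        have b3: "nat ((int n + (d + 1)) div 2) = Suc j" unfolding q using j by simp
        show ?thesis using b1 b2 b3 by (simp only: B_def if_True simp_thms)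
      qed
      show ?thesis using h1 a b j by simp
    qed
  next
    case False
    have "\<bar>d\<bar> > int (Suc n)" "\<bar>d - 1\<bar> > int n" "\<bar>d + 1\<bar> > int n" using False k by (simp_all add: abs_if split: if_splits; linarith)+
    then show ?thesis by (simp add: B_zero)
  qed
qed


definition W :: "nat \<Rightarrow> int \<Rightarrow> int \<Rightarrow> rat" where
"W n p q = of_nat (B n (p + q)) * of_nat (B n (p - q))"

lemma W_suc: "W (Suc n) p q = W n (p - 1) q + W n (p + 1) q + W n p (q - 1) + W n p (q + 1)"
proof -
  have e: "p - 1 + q = p + q - 1" "p + 1 + q = p + q + 1" "p + (q - 1) = p + q - 1" "p + (q + 1) = p + q + 1"
    "p - 1 - q = p - q - 1" "p + 1 - q = p - q + 1" "p - (q - 1) = p - q + 1" "p - (q + 1) = p - q - 1" by simp_all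
  show ?thesis unfolding W_def B_suc e by (simp add: algebra_simps)
qed

lemma W_negp: "W n (-p) q = W n p q"
proof -
  have "B n (-p + q) = B n (p - q)" using B_neg[of n "p - q"] by simp
  moreover have "B n (-p - q) = B n (p + q)" using B_neg[of n "p + q"] by simp
  ultimately show ?thesis unfolding W_def by simp
qed

lemma W_negq: "W n p (-q) = W n p q"
  unfolding W_def by (simp add: mult.commute)

lemma W_zero: "\<bar>p\<bar> > int n \<or> \<bar>q\<bar> > int n \<Longrightarrow> W n p q = 0"
proof -
  assume a: "\<bar>p\<bar> > int n \<or> \<bar>q\<bar> > int n"
  have "\<bar>p + q\<bar> > int n \<or> \<bar>p - q\<bar> > int n" using a by (auto simp: abs_if split: if_splits)
  then show ?thesis unfolding W_def by (auto simp: B_zero)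
qed

definition up :: "int \<Rightarrow> int" where "up i = (if i \<le> -1 then i - 1 else i + 3)"

definition Phi :: "int \<Rightarrow> (int \<Rightarrow> rat) \<Rightarrow> rat" where
"Phi i h = h (i + 1) - h (up i)"

lemma Phi_add: "Phi i (\<lambda>a. f a + g a) = Phi i f + Phi i g"
  unfolding Phi_def by simp

lemma Phi_key:
  assumes hs: "\<And>a. H (-a) = H a"
  shows "Phi i (\<lambda>a. H (a - 1) + H (a + 1)) = Phi (i - 1) H + (if i = -1 then 0 else Phi (i + 1) H)"
proof -
  consider "i \<le> -2" | "i = -1" | "i = 0" | "i \<ge> 1" by linarith
  then show ?thesis
  proof cases
    case 1 then show ?thesis unfolding Phi_def up_def by simp
  next
    case 2 then show ?thesis unfolding Phi_def up_def using hs[of 1] by simp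
  next
    case 3 then show ?thesis unfolding Phi_def up_def using hs[of 2] by simp
  next
    case 4 then show ?thesis unfolding Phi_def up_def by simp
  qed
qed

definition Fc :: lseries where
"Fc n i j = Phi i (\<lambda>a. Phi j (\<lambda>b. W n a b))"

lemma Fc_suc: "Fc (Suc n) i j = Fc n (i - 1) j + Fc n (i + 1) j + Fc n i (j - 1) + Fc n i (j + 1)
   - (if i = -1 then Fc n 0 j else 0) - (if j = -1 then Fc n i 0 else 0)"
proof -
  define H where "H a = Phi j (\<lambda>b. W n a b)" for a
  have hs: "H (-a) = H a" for a unfolding H_def W_negp ..
  have hs2: "W n a (-b) = W n a b" for a b by (rule W_negq)
  have "Fc (Suc n) i j = Phi i (\<lambda>a. H (a - 1) + H (a + 1)) + Phi i (\<lambda>a. Phi j (\<lambda>b. W n a (b - 1) + W n a (b + 1)))"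
    unfolding Fc_def W_suc H_def Phi_def by simp
  also have "Phi i (\<lambda>a. H (a - 1) + H (a + 1)) = Fc n (i - 1) j + (if i = -1 then 0 else Fc n (i + 1) j)"
    using Phi_key[of H i, OF hs] unfolding Fc_def H_def[abs_def] by simp
  also have "Phi i (\<lambda>a. Phi j (\<lambda>b. W n a (b - 1) + W n a (b + 1))) = Phi i (\<lambda>a. Phi (j - 1) (W n a) + (if j = -1 then 0 else Phi (j + 1) (W n a)))"
  proof -
    have "Phi j (\<lambda>b. W n a (b - 1) + W n a (b + 1)) = Phi (j - 1) (W n a) + (if j = -1 then 0 else Phi (j + 1) (W n a))" for a
      using Phi_key[of "W n a" j] hs2 by simp
    then show ?thesis by simp
  qed
  also have "\<dots> = Fc n i (j - 1) + (if j = -1 then 0 else Fc n i (j + 1))"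
    unfolding Fc_def by (simp add: Phi_def)
  finally show ?thesis by simp
qed

lemma W0: "W 0 p q = (if p = 0 \<and> q = 0 then 1 else 0)"
  unfolding W_def B_def by auto

lemma Fc0: "Fc 0 i j = (if i = -1 \<and> j = -1 then 1 else 0)"
  unfolding Fc_def Phi_def W0 up_def by auto

lemma func_eq_Fc: "func_eq Fc"
  unfolding func_eq_def
proof (intro allI)
  fix n i j
  show "Fc n i j - mult_t (mult_S Fc) n i j =
     xbar_ybar n i j - mult_t (mult_xbar (coeff_x0 Fc)) n i j - mult_t (mult_ybar (coeff_y0 Fc)) n i j"
  proof (cases n)
    case 0 then show ?thesis by (simp add: Fc0 mult_t_def xbar_ybar_def)
  next
    case (Suc m) then show ?thesis
      by (simp add: Fc_suc mult_t_def xbar_ybar_def mult_S_def mult_xbar_def mult_ybar_def coeff_x0_def coeff_y0_def)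
  qed
qed


lemma Fc_zero: assumes "\<bar>i\<bar> > int n + 3 \<or> \<bar>j\<bar> > int n + 3" shows "Fc n i j = 0"
proof -
  have u: "\<bar>up k\<bar> > int n" "\<bar>k + 1\<bar> > int n" if "\<bar>k\<bar> > int n + 3" for k
    using that unfolding up_def by (auto simp: abs_if split: if_splits)
  show ?thesis using assms
  proof
    assume "\<bar>i\<bar> > int n + 3"
    then show ?thesis using u[of i] unfolding Fc_def Phi_def by (simp add: W_zero)
  next
    assume "\<bar>j\<bar> > int n + 3"
    then show ?thesis using u[of j] unfolding Fc_def Phi_def by (simp add: W_zero)
  qed
qed

lemma supp_Fc: "{(i, j). Fc n i j \<noteq> 0} \<subseteq> {-(int n + 3)..int n + 3} \<times> {-(int n + 3)..int n + 3}"
proof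
  fix x assume "x \<in> {(i, j). Fc n i j \<noteq> 0}"
  then obtain i j where x: "x = (i, j)" "Fc n i j \<noteq> 0" by auto
  then have "\<not> (\<bar>i\<bar> > int n + 3 \<or> \<bar>j\<bar> > int n + 3)" using Fc_zero by blast
  then show "x \<in> {-(int n + 3)..int n + 3} \<times> {-(int n + 3)..int n + 3}" using x by auto
qed

lemma is_lseries_Fc: "is_lseries Fc"
  unfolding is_lseries_def using supp_Fc by (meson finite_SigmaI finite_atLeastAtMost_int finite_subset)

lemma unique_sol:
  assumes "func_eq F" "func_eq G" shows "F = G"
proof -
  have "\<forall>i j. F n i j = G n i j" for n
  proof (induction n)
    case 0
    then show ?case using assms unfolding func_eq_def
      by (metis (no_types, lifting) coeff_x0_def coeff_y0_def diff_zero mult_t_def)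
  next
    case (Suc n)
    have "F (Suc n) i j = G (Suc n) i j" for i j
    proof -
      have a: "F (Suc n) i j = mult_t (mult_S F) (Suc n) i j + xbar_ybar (Suc n) i j - mult_t (mult_xbar (coeff_x0 F)) (Suc n) i j - mult_t (mult_ybar (coeff_y0 F)) (Suc n) i j"
        using assms(1) unfolding func_eq_def by (metis add.commute diff_add_cancel diff_diff_eq2 add_diff_eq)
      have b: "G (Suc n) i j = mult_t (mult_S G) (Suc n) i j + xbar_ybar (Suc n) i j - mult_t (mult_xbar (coeff_x0 G)) (Suc n) i j - mult_t (mult_ybar (coeff_y0 G)) (Suc n) i j"
        using assms(2) unfolding func_eq_def by (metis add.commute diff_add_cancel diff_diff_eq2 add_diff_eq)
      show ?thesis unfolding a b using Suc.IH
        by (simp add: mult_t_def mult_S_def mult_xbar_def mult_ybar_def coeff_x0_def coeff_y0_def)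
    qed
    then show ?case by blast
  qed
  then show ?thesis by blast
qed

lemma ivl_suc: "{-int (Suc M)..int (Suc M)} = insert (-int (Suc M)) (insert (int (Suc M)) {-int M..int M})"
  by auto

lemma Phi_sum: "(\<Sum>i\<in>{-int M..int M}. Phi i h) = h (-1) + h 0 + h 1 + h 2 - h (-int M - 1) - h (-int M) - h (int M + 2) - h (int M + 3)"
proof (induction M)
  case 0 then show ?case by (simp add: Phi_def up_def)
next
  case (Suc M)
  have eq: "(\<Sum>i\<in>{-int (Suc M)..int (Suc M)}. Phi i h) = Phi (-int (Suc M)) h + Phi (int (Suc M)) h + (\<Sum>i\<in>{-int M..int M}. Phi i h)"
    unfolding ivl_suc by simp
  have e2: "- 1 - int M = - int M - 1" by simp
  show ?case unfolding eq Suc.IH by (simp add: Phi_def up_def algebra_simps e2)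
qed

lemma Phi_sum0: assumes "\<And>a. \<bar>a\<bar> \<ge> int M \<Longrightarrow> h a = 0"
  shows "(\<Sum>i\<in>{-int M..int M}. Phi i h) = h (-1) + h 0 + h 1 + h 2"
  unfolding Phi_sum using assms by simp

lemma sum_Phi: "(\<Sum>j\<in>J. Phi i (g j)) = Phi i (\<lambda>a. \<Sum>j\<in>J. g j a)"
  unfolding Phi_def by (simp add: sum_subtractf)

lemma eval_Fc: "eval11 Fc n = (\<Sum>p\<in>{-1,0,1,2::int}. \<Sum>q\<in>{-1,0,1,2::int}. W n p q)"
proof -
  define M where "M = n + 3"
  have box: "{-(int n + 3)..int n + 3} = {-int M..int M}" unfolding M_def by simp
  have "eval11 Fc n = (\<Sum>(i, j)\<in>{-int M..int M} \<times> {-int M..int M}. Fc n i j)"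
    unfolding eval11_def using supp_Fc[of n] unfolding box
    by (intro sum.mono_neutral_left) auto
  also have "\<dots> = (\<Sum>i\<in>{-int M..int M}. \<Sum>j\<in>{-int M..int M}. Fc n i j)"
    by (rule sum.cartesian_product[symmetric])
  also have "\<dots> = (\<Sum>i\<in>{-int M..int M}. Phi i (\<lambda>a. \<Sum>j\<in>{-int M..int M}. Phi j (W n a)))"
    unfolding Fc_def sum_Phi by simp
  also have "\<dots> = (\<Sum>i\<in>{-int M..int M}. Phi i (\<lambda>a. \<Sum>q\<in>{-1,0,1,2::int}. W n a q))"
  proof -
    have "(\<Sum>j\<in>{-int M..int M}. Phi j (W n a)) = (\<Sum>q\<in>{-1,0,1,2::int}. W n a q)" for a
      by (subst Phi_sum0) (auto simp: M_def W_zero)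
    then show ?thesis by simp
  qed
  also have "\<dots> = (\<Sum>p\<in>{-1,0,1,2::int}. \<Sum>q\<in>{-1,0,1,2::int}. W n p q)"
    by (subst Phi_sum0) (auto simp: M_def W_zero)
  finally show ?thesis .
qed


lemma suc_rat: "(of_nat n + 1) * (of_nat (n choose k) :: rat) = of_nat (Suc n choose Suc k) * (of_nat k + 1)"
proof -
  have "(of_nat (Suc n * (n choose k)) :: rat) = of_nat ((Suc n choose Suc k) * Suc k)"
    using Suc_times_binomial_eq by metis
  then show ?thesis by (simp add: algebra_simps)
qed

lemma binom_rat: "(of_nat (n choose Suc k) :: rat) * (of_nat k + 1) = of_nat (n choose k) * (of_nat n - of_nat k)"
proof -
  have p: "(of_nat (Suc n choose Suc k) :: rat) = of_nat (n choose k) + of_nat (n choose Suc k)" by simp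
  show ?thesis using suc_rat[of n k] unfolding p by (simp add: algebra_simps)
qed

definition Af :: "nat \<Rightarrow> rat" where
"Af n = (let b = (\<lambda>k. of_nat (B n k) :: rat) in
   b 0 ^ 2 + 4 * b 0 * b 2 + 2 * b 2 ^ 2 + b 0 * b 4 + 4 * b 1 ^ 2 + 4 * b 1 * b 3)"

lemma eval_Af: "eval11 Fc n = Af n"
proof -
  have n: "B n (-1) = B n 1" "B n (-2) = B n 2" "B n (-3) = B n 3" using B_neg[of n 1] B_neg[of n 2] B_neg[of n 3] by simp_all
  show ?thesis unfolding eval_Fc Af_def Let_def by (simp add: W_def n power2_eq_square algebra_simps)
qed

lemma B_even: "B (2*m) (2 * int k) = (2*m) choose (m + k)"
proof (cases "k \<le> m")
  case True then show ?thesis unfolding B_def by (simp add: nat_add_distrib)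
next
  case False then show ?thesis unfolding B_def by simp
qed

lemma B_odd: "B (2*m+1) (2 * int k + 1) = (2*m+1) choose (m + k + 1)"
proof (cases "k \<le> m")
  case True
  have h: "nat ((int (2*m+1) + (2 * int k + 1)) div 2) = m + k + 1" by simp
  have "\<bar>2 * int k + 1\<bar> \<le> int (2*m+1)" using True by simp
  moreover have "even (int (2*m+1) + (2 * int k + 1))" by simp
  ultimately show ?thesis unfolding B_def h by (simp only: if_True simp_thms)
next
  case False then show ?thesis unfolding B_def by simp
qed

lemma B_even_odd: "B (2*m) (2 * int k + 1) = 0" unfolding B_def by simp
lemma B_odd_even: "B (2*m+1) (2 * int k) = 0" unfolding B_def by simp

lemma Af_even: "Af (2*m) = (let c = \<lambda>k. of_nat ((2*m) choose (m+k)) :: rat in c 0 ^ 2 + 4 * c 0 * c 1 + 2 * c 1 ^ 2 + c 0 * c 2)"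
  using B_even[of m 0] B_even[of m 1] B_even[of m 2] B_even_odd[of m 0] B_even_odd[of m 1]
  unfolding Af_def Let_def by simp

lemma Af_odd: "Af (2*m+1) = (let c = \<lambda>k. of_nat ((2*m+1) choose (m+k)) :: rat in 4 * c 1 ^ 2 + 4 * c 1 * c 2)"
  using B_odd[of m 0] B_odd[of m 1] B_odd_even[of m 0] B_odd_even[of m 1] B_odd_even[of m 2]
  unfolding Af_def Let_def by (simp add: add.commute)


lemma rels:
  fixes m :: nat
  defines "M \<equiv> (of_nat m :: rat)"
  shows
  "of_nat (2*m choose (m+1)) * (M+1) = of_nat (2*m choose (m+0)) * M"
  "of_nat (2*m choose (m+2)) * (M+2) = of_nat (2*m choose (m+1)) * (M - 1)"
  "(2*M+1) * of_nat (2*m choose (m+0)) = of_nat ((2*m+1) choose (m+1)) * (M+1)"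
  "of_nat ((2*m+1) choose (m+2)) * (M+2) = of_nat ((2*m+1) choose (m+1)) * M"
  "(2*M+2) * of_nat ((2*m+1) choose (m+1)) = of_nat ((2*(m+1)) choose ((m+1)+1)) * (M+2)"
  "of_nat ((2*(m+1)) choose ((m+1)+1)) * (M+2) = of_nat ((2*(m+1)) choose ((m+1)+0)) * (M+1)"
  "of_nat ((2*(m+1)) choose ((m+1)+2)) * (M+3) = of_nat ((2*(m+1)) choose ((m+1)+1)) * M"
  "(2*M+3) * of_nat ((2*(m+1)) choose ((m+1)+0)) = of_nat ((2*(m+1)+1) choose ((m+1)+1)) * (M+2)"
  "of_nat ((2*(m+1)+1) choose ((m+1)+2)) * (M+3) = of_nat ((2*(m+1)+1) choose ((m+1)+1)) * (M+1)"
  unfolding M_def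
  using binom_rat[of "2*m" m] binom_rat[of "2*m" "m+1"] suc_rat[of "2*m" m] binom_rat[of "2*m+1" "m+1"]
    suc_rat[of "2*m+1" "m+1"] binom_rat[of "2*m+2" "m+1"] binom_rat[of "2*m+2" "m+2"] suc_rat[of "2*m+2" "m+1"]
    binom_rat[of "2*m+3" "m+2"]
  by (simp_all add: algebra_simps of_nat_diff numeral_eq_Suc)


definition Rc :: "nat \<Rightarrow> rat" where
"Rc n = (let a = Af; m = (of_nat n :: rat) in
        (m + 2) * (m + 4) * (m + 6) * (m^2 + 2*m - 1) * a (n + 2)
        - 4 * (m + 3) * (2*m^3 + 9*m^2 + 4*m - 18) * a (n + 1)
        - 16 * (m + 1) * (m + 2) * (m + 3) * (m^2 + 4*m + 2) * a n)"

lemma Rc_zero: "Rc n = 0"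
proof -
  obtain m where "n = 2*m \<or> n = 2*m+1" by (metis oddE evenE)
  define M where "M = (of_nat m :: rat)"
  define c where "c = (of_nat (2*m choose (m+0)) :: rat)"
  define x1 where "x1 = (of_nat (2*m choose (m+1)) :: rat)"
  define x2 where "x2 = (of_nat (2*m choose (m+2)) :: rat)"
  define d1 where "d1 = (of_nat ((2*m+1) choose (m+1)) :: rat)"
  define d2 where "d2 = (of_nat ((2*m+1) choose (m+2)) :: rat)"
  define e1 where "e1 = (of_nat ((2*(m+1)) choose ((m+1)+0)) :: rat)"
  define e2 where "e2 = (of_nat ((2*(m+1)) choose ((m+1)+1)) :: rat)"
  define e3 where "e3 = (of_nat ((2*(m+1)) choose ((m+1)+2)) :: rat)"
  define f1 where "f1 = (of_nat ((2*(m+1)+1) choose ((m+1)+1)) :: rat)"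
  define f2 where "f2 = (of_nat ((2*(m+1)+1) choose ((m+1)+2)) :: rat)"
  note r = rels[of m, folded M_def c_def x1_def x2_def d1_def d2_def e1_def e2_def e3_def f1_def f2_def]
  have M0: "M \<ge> 0" unfolding M_def by simp
  have sx1: "x1 = c*M/(M+1)" using r(1) M0 by (simp add: field_simps)
  have sx2: "x2 = x1*(M-1)/(M+2)" using r(2) M0 by (simp add: field_simps)
  have sd1: "d1 = (2*M+1)*c/(M+1)" using r(3) M0 by (simp add: field_simps)
  have sd2: "d2 = d1*M/(M+2)" using r(4) M0 by (simp add: field_simps)
  have se2: "e2 = (2*M+2)*d1/(M+2)" using r(5) M0 by (simp add: field_simps)
  have se1: "e1 = e2*(M+2)/(M+1)" using r(6) M0 by (simp add: field_simps)
  have se3: "e3 = e2*M/(M+3)" using r(7) M0 by (simp add: field_simps)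
  have sf1: "f1 = (2*M+3)*e1/(M+2)" using r(8) M0 by (simp add: field_simps)
  have sf2: "f2 = f1*(M+1)/(M+3)" using r(9) M0 by (simp add: field_simps)
  have A0: "Af (2*m) = c^2 + 4*c*x1 + 2*x1^2 + c*x2"
    unfolding Af_even Let_def c_def x1_def x2_def by simp
  have A1: "Af (2*m+1) = 4*d1^2 + 4*d1*d2"
    unfolding Af_odd Let_def d1_def d2_def by simp
  have A2: "Af (2*(m+1)) = e1^2 + 4*e1*e2 + 2*e2^2 + e1*e3"
    unfolding Af_even[of "m+1"] Let_def e1_def e2_def e3_def by simp
  have A3: "Af (2*(m+1)+1) = 4*f1^2 + 4*f1*f2"
    unfolding Af_odd[of "m+1"] Let_def f1_def f2_def by simp
  have p1: "M + 1 \<noteq> 0" "M + 2 \<noteq> 0" "M + 3 \<noteq> 0" using M0 by linarith+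
  show ?thesis
  proof (cases "n = 2*m")
    case True
    have i: "n + 2 = 2*(m+1)" "n + 1 = 2*m+1" using True by simp_all
    have "of_nat n = 2*M" unfolding M_def True by simp
    then show ?thesis unfolding Rc_def Let_def i A2 A1 unfolding True A0
      unfolding sf2 sf1 se3 se1 se2 sd2 sd1 sx2 sx1 using p1 by (simp add: divide_simps) (simp add: algebra_simps eval_nat_numeral)
  next
    case False
    then have n: "n = 2*m+1" using \<open>n = 2*m \<or> n = 2*m+1\<close> by simp
    have i: "n + 2 = 2*(m+1)+1" "n + 1 = 2*(m+1)" using n by simp_all
    have "of_nat n = 2*M+1" unfolding M_def n by simp
    then show ?thesis unfolding Rc_def Let_def i A3 A2 unfolding n A1
      unfolding sf2 sf1 se3 se1 se2 sd2 sd1 sx2 sx1 using p1 by (simp add: divide_simps) (simp add: algebra_simps eval_nat_numeral)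
  qed
qed


theorem mainTheorem5:
  shows "(\<exists>!F. is_lseries F \<and> func_eq F) \<and>
    (\<forall>F. is_lseries F \<and> func_eq F \<longrightarrow>
      (\<forall>n::nat. let a = eval11 F; m = (of_nat n :: rat) in
        (m + 2) * (m + 4) * (m + 6) * (m^2 + 2*m - 1) * a (n + 2)
        - 4 * (m + 3) * (2*m^3 + 9*m^2 + 4*m - 18) * a (n + 1)
        - 16 * (m + 1) * (m + 2) * (m + 3) * (m^2 + 4*m + 2) * a n = 0))"
proof
  show "\<exists>!F. is_lseries F \<and> func_eq F"
    using is_lseries_Fc func_eq_Fc unique_sol by blast
next
  have ea: "eval11 Fc = Af" using eval_Af by (rule ext)
  show "\<forall>F. is_lseries F \<and> func_eq F \<longrightarrow>
      (\<forall>n::nat. let a = eval11 F; m = (of_nat n :: rat) in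
        (m + 2) * (m + 4) * (m + 6) * (m^2 + 2*m - 1) * a (n + 2)
        - 4 * (m + 3) * (2*m^3 + 9*m^2 + 4*m - 18) * a (n + 1)
        - 16 * (m + 1) * (m + 2) * (m + 3) * (m^2 + 4*m + 2) * a n = 0)"
  proof (intro allI impI)
    fix F n assume "is_lseries F \<and> func_eq F"
    then have "F = Fc" using unique_sol func_eq_Fc by blast
    then show "let a = eval11 F; m = (of_nat n :: rat) in
        (m + 2) * (m + 4) * (m + 6) * (m^2 + 2*m - 1) * a (n + 2)
        - 4 * (m + 3) * (2*m^3 + 9*m^2 + 4*m - 18) * a (n + 1)
        - 16 * (m + 1) * (m + 2) * (m + 3) * (m^2 + 4*m + 2) * a n = 0"
      using Rc_zero[of n] unfolding Rc_def Let_def \<open>F = Fc\<close> ea by simp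
  qed
qed
end
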